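(* Let $A$ be any subset of $S$. Then $C_S(A)$ equals either $S$, or $K$, or $C_S(P)$ for some element $P \in S \setminus K$.
   Context: Standing conventions: $K$ is a field, $R = K[y]$, $\sigma$ is a $K$-algebra endomorphism of $R$ with $\deg_y(\sigma(y)) > 1$, and $\delta$ is a $K$-linear $\sigma$-derivation of $R$ ($\delta(ab) = \sigma(a)\delta(b) + \delta(a)b$). $S = R[x;\sigma,\delta]$ is the Ore extension (polynomials $\sum r_i x^i$, $r_i\in R$, with $xr = \sigma(r)x + \delta(r)$). For $A\subseteq S$, $C_S(A)$ is the set of elements of $S$ commuting with every element of $A$; $C_S(P)=C_S(\{P\})$. *)

theory Defs
  imports "HOL-Computational_Algebra.Polynomial"
begin

(* Elements of S = R[x;sigma,delta], R = K[y], are represented as polynomials in x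
   with coefficients in R, i.e. as values of type 'a poly poly:
   the polynomial  sum_i r_i x^i  is the 'a poly poly whose i-th coefficient is r_i. *)

(* left multiplication by x:  x * (sum r_i x^i) = sum (sigma(r_i) x^(i+1) + delta(r_i) x^i) *)
definition ore_xmul :: "('a::comm_ring_1 poly \<Rightarrow> 'a poly) \<Rightarrow> ('a poly \<Rightarrow> 'a poly)
    \<Rightarrow> 'a poly poly \<Rightarrow> 'a poly poly" where
  "ore_xmul \<sigma> \<delta> Q = pCons 0 (map_poly \<sigma> Q) + map_poly \<delta> Q"

definition ore_mult :: "('a::comm_ring_1 poly \<Rightarrow> 'a poly) \<Rightarrow> ('a poly \<Rightarrow> 'a poly)
    \<Rightarrow> 'a poly poly \<Rightarrow> 'a poly poly \<Rightarrow> 'a poly poly" where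
  "ore_mult \<sigma> \<delta> P Q = (\<Sum>i\<le>degree P. smult (coeff P i) ((ore_xmul \<sigma> \<delta> ^^ i) Q))"

definition ore_centralizer :: "('a::comm_ring_1 poly \<Rightarrow> 'a poly) \<Rightarrow> ('a poly \<Rightarrow> 'a poly)
    \<Rightarrow> 'a poly poly set \<Rightarrow> 'a poly poly set" where
  "ore_centralizer \<sigma> \<delta> A = {Q. \<forall>P\<in>A. ore_mult \<sigma> \<delta> P Q = ore_mult \<sigma> \<delta> Q P}"

definition ore_K :: "'a::comm_ring_1 poly poly set" where
  "ore_K = range (\<lambda>c. [:[:c:]:])"

definition ore_sigma_ok :: "('a::field poly \<Rightarrow> 'a poly) \<Rightarrow> bool" where
  "ore_sigma_ok \<sigma> \<longleftrightarrow>
     (\<forall>a b. \<sigma> (a + b) = \<sigma> a + \<sigma> b) \<and>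
     (\<forall>a b. \<sigma> (a * b) = \<sigma> a * \<sigma> b) \<and>
     (\<forall>c a. \<sigma> (smult c a) = smult c (\<sigma> a)) \<and>
     \<sigma> 1 = 1 \<and>
     degree (\<sigma> [:0, 1:]) > 1"

definition ore_delta_ok :: "('a::field poly \<Rightarrow> 'a poly) \<Rightarrow> ('a poly \<Rightarrow> 'a poly) \<Rightarrow> bool" where
  "ore_delta_ok \<sigma> \<delta> \<longleftrightarrow>
     (\<forall>a b. \<delta> (a + b) = \<delta> a + \<delta> b) \<and>
     (\<forall>c a. \<delta> (smult c a) = smult c (\<delta> a)) \<and>
     (\<forall>a b. \<delta> (a * b) = \<sigma> a * \<delta> b + \<delta> a * b)"

end

theory Submission
  imports Defs
begin


locale ore =
  fixes \<sigma> \<delta> :: "'a::field poly \<Rightarrow> 'a poly"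
  assumes sig: "ore_sigma_ok \<sigma>" and del: "ore_delta_ok \<sigma> \<delta>"
begin

lemma s_add: "\<sigma> (a + b) = \<sigma> a + \<sigma> b" using sig by (simp add: ore_sigma_ok_def)
lemma s_mult: "\<sigma> (a * b) = \<sigma> a * \<sigma> b" using sig by (simp add: ore_sigma_ok_def)
lemma s_smult: "\<sigma> (smult c a) = smult c (\<sigma> a)" using sig by (simp add: ore_sigma_ok_def)
lemma s_1: "\<sigma> 1 = 1" using sig by (simp add: ore_sigma_ok_def)
lemma s_deg: "degree (\<sigma> [:0,1:]) > 1" using sig by (simp add: ore_sigma_ok_def)
lemma d_add: "\<delta> (a + b) = \<delta> a + \<delta> b" using del by (simp add: ore_delta_ok_def)
lemma d_smult: "\<delta> (smult c a) = smult c (\<delta> a)" using del by (simp add: ore_delta_ok_def)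
lemma d_mult: "\<delta> (a * b) = \<sigma> a * \<delta> b + \<delta> a * b" using del by (simp add: ore_delta_ok_def)

lemma s_0[simp]: "\<sigma> 0 = 0"
proof - have "\<sigma> 0 = \<sigma> 0 + \<sigma> 0" using s_add[of 0 0] by simp then show ?thesis by (metis add_cancel_right_right) qed
lemma d_0[simp]: "\<delta> 0 = 0"
proof - have "\<delta> 0 = \<delta> 0 + \<delta> 0" using d_add[of 0 0] by simp then show ?thesis by (metis add_cancel_right_right) qed
lemma s_const[simp]: "\<sigma> [:c:] = [:c:]"
  using s_smult[of c 1] s_1 by simp
lemma d_1: "\<delta> 1 = 0"
proof - have "\<delta> 1 = \<delta> 1 + \<delta> 1" using d_mult[of 1 1] s_1 by simp then show ?thesis by (metis add_cancel_right_right) qed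
lemma d_const[simp]: "\<delta> [:c:] = 0"
  using d_smult[of c 1] d_1 by simp
lemma s_uminus: "\<sigma> (- a) = - \<sigma> a"
proof - have "\<sigma> (-a) + \<sigma> a = 0" using s_add[of "-a" a] by simp then show ?thesis by (metis eq_neg_iff_add_eq_0) qed
lemma d_uminus: "\<delta> (- a) = - \<delta> a"
proof - have "\<delta> (-a) + \<delta> a = 0" using d_add[of "-a" a] by simp then show ?thesis by (metis eq_neg_iff_add_eq_0) qed
lemma s_diff: "\<sigma> (a - b) = \<sigma> a - \<sigma> b" using s_add[of a "-b"] s_uminus by simp
lemma d_diff: "\<delta> (a - b) = \<delta> a - \<delta> b" using d_add[of a "-b"] d_uminus by simp

definition h where "h = \<sigma> [:0,1:]"

lemma s_pcomp: "\<sigma> a = pcompose a h"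
proof (induction a)
  case 0 then show ?case by simp
next
  case (pCons c p)
  have "pCons c p = [:c:] + [:0,1:] * p" by simp
  then have "\<sigma> (pCons c p) = [:c:] + h * \<sigma> p"
    by (metis s_add s_mult s_const h_def)
  then show ?case using pCons by (simp add: pcompose_pCons)
qed

definition sk where "sk k = \<sigma> ^^ k"
definition hk where "hk k = sk k [:0,1:]"

lemma sk_Suc': "sk (Suc k) a = \<sigma> (sk k a)" by (simp only: sk_def funpow.simps(2) o_apply)

lemma sk_pcomp: "sk k a = pcompose a (hk k)"
proof (induction k arbitrary: a)
  case 0 then show ?case by (simp add: sk_def hk_def)
next
  case (Suc k)
  have "sk (Suc k) a = \<sigma> (sk k a)" by (rule sk_Suc')
  also have "\<dots> = pcompose (sk k a) h" by (rule s_pcomp)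
  also have "sk k a = pcompose a (hk k)" by (rule Suc)
  also have "pcompose (pcompose a (hk k)) h = pcompose a (pcompose (hk k) h)" by (simp add: pcompose_assoc)
  also have "pcompose (hk k) h = hk (Suc k)"
    unfolding hk_def sk_Suc' by (rule s_pcomp[symmetric])
  finally show ?case .
qed

lemma h_deg: "degree h > 1" using s_deg h_def by simp

lemma deg_hk: "degree (hk k) = degree h ^ k"
proof (induction k)
  case 0 then show ?case by (simp add: sk_def hk_def)
next
  case (Suc k)
  have "hk (Suc k) = pcompose (hk k) h" unfolding hk_def sk_Suc' by (rule s_pcomp)
  then show ?case using Suc by (simp add: degree_pcompose)
qed

lemma deg_sk: "degree (sk k a) = degree a * degree h ^ k"
  by (simp add: sk_pcomp degree_pcompose deg_hk)

lemma sk_eq0: "sk k a = 0 \<longleftrightarrow> a = 0"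
proof -
  have "degree (hk k) > 0" using deg_hk h_deg by simp
  then show ?thesis using pcompose_eq_0_iff by (simp add: sk_pcomp)
qed

lemma sk_add: "sk k (a + b) = sk k a + sk k b" by (simp add: sk_pcomp pcompose_add)
lemma sk_diff: "sk k (a - b) = sk k a - sk k b" by (simp add: sk_pcomp pcompose_diff)
lemma sk_mult: "sk k (a * b) = sk k a * sk k b" by (simp add: sk_pcomp pcompose_mult)
lemma sk_smult: "sk k (smult c a) = smult c (sk k a)" by (simp add: sk_pcomp pcompose_smult)
lemma sk_0: "sk 0 a = a" by (simp add: sk_def)

end



lemma smult_sum_right: "smult a (sum f S) = (\<Sum>i\<in>S. smult a (f i))"
  by (induction S rule: infinite_finite_induct) (simp_all add: smult_add_right)

context ore begin

abbreviation xm where "xm \<equiv> ore_xmul \<sigma> \<delta>"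
abbreviation mul where "mul \<equiv> ore_mult \<sigma> \<delta>"

lemma coeff_xm: "coeff (xm Q) j = (case j of 0 \<Rightarrow> 0 | Suc j' \<Rightarrow> \<sigma> (coeff Q j')) + \<delta> (coeff Q j)"
  by (simp add: ore_xmul_def coeff_pCons coeff_map_poly split: nat.splits)

lemma xm_add: "xm (A + B) = xm A + xm B"
  by (rule poly_eqI) (simp add: coeff_xm s_add d_add split: nat.splits)
lemma xm_0[simp]: "xm 0 = 0"
  by (rule poly_eqI) (simp add: coeff_xm split: nat.splits)
lemma xm_uminus: "xm (- A) = - xm A"
  by (rule poly_eqI) (simp add: coeff_xm s_uminus d_uminus split: nat.splits)
lemma xm_diff: "xm (A - B) = xm A - xm B"
  by (rule poly_eqI) (simp add: coeff_xm s_diff d_diff split: nat.splits)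
lemma xm_smult: "xm (smult r Q) = smult (\<sigma> r) (xm Q) + smult (\<delta> r) Q"
  by (rule poly_eqI) (simp add: coeff_xm s_mult d_mult algebra_simps split: nat.splits)
lemma xm_sc: "xm (smult [:c:] Q) = smult [:c:] (xm Q)"
  using xm_smult[of "[:c:]" Q] by simp
lemma xm_sum: "xm (sum f S) = (\<Sum>i\<in>S. xm (f i))"
  by (induction S rule: infinite_finite_induct) (simp_all add: xm_add)

lemma xmk_add: "(xm^^k) (A + B) = (xm^^k) A + (xm^^k) B"
  by (induction k) (simp_all add: xm_add)
lemma xmk_0[simp]: "(xm^^k) 0 = 0"
  by (induction k) simp_all
lemma xmk_diff: "(xm^^k) (A - B) = (xm^^k) A - (xm^^k) B"
  by (induction k) (simp_all add: xm_diff)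
lemma xmk_sc: "(xm^^k) (smult [:c:] Q) = smult [:c:] ((xm^^k) Q)"
  by (induction k) (simp_all add: xm_sc)

lemma deg_xm_le: "degree (xm Q) \<le> Suc (degree Q)"
proof (rule degree_le, intro allI impI)
  fix j assume "Suc (degree Q) < j"
  then show "coeff (xm Q) j = 0" by (simp add: coeff_xm coeff_eq_0 split: nat.splits)
qed

lemma coeff_xm_top: "coeff (xm Q) (Suc (degree Q)) = \<sigma> (lead_coeff Q)"
  by (simp add: coeff_xm coeff_eq_0)

lemma deg_xmk_le: "degree ((xm^^k) Q) \<le> degree Q + k"
proof (induction k)
  case 0 then show ?case by simp
next
  case (Suc k) then show ?case using deg_xm_le[of "(xm^^k) Q"] by simp
qed

lemma xmk_top: "Q \<noteq> 0 \<Longrightarrow> degree ((xm^^k) Q) = degree Q + k \<and> coeff ((xm^^k) Q) (degree Q + k) = sk k (lead_coeff Q)"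
proof (induction k)
  case 0 then show ?case by (simp add: sk_0)
next
  case (Suc k)
  let ?R = "(xm^^k) Q"
  have c: "coeff (xm ?R) (Suc (degree ?R)) = sk (Suc k) (lead_coeff Q)"
    using coeff_xm_top[of ?R] Suc by (simp add: sk_Suc')
  have nz: "sk (Suc k) (lead_coeff Q) \<noteq> 0" using Suc.prems sk_eq0 by simp
  have "degree (xm ?R) = Suc (degree ?R)"
    using deg_xm_le[of ?R] c nz le_degree by (metis le_antisym)
  then show ?case using c Suc by simp
qed

lemma mult_eq: "degree P \<le> N \<Longrightarrow> mul P Q = (\<Sum>i\<le>N. smult (coeff P i) ((xm^^i) Q))"
  unfolding ore_mult_def
  by (rule sum.mono_neutral_left) (auto simp: coeff_eq_0)

lemma mul_add1: "mul (P1 + P2) Q = mul P1 Q + mul P2 Q"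
proof -
  let ?N = "max (degree P1) (degree P2)"
  have "degree (P1 + P2) \<le> ?N" by (rule degree_add_le) auto
  then show ?thesis
    by (simp add: mult_eq[of _ ?N] sum.distrib smult_add_left)
qed

lemma mul_smult1: "mul (smult r P) Q = smult r (mul P Q)"
  using degree_smult_le[of r P]
  by (simp add: mult_eq[of _ "degree P"] smult_sum_right)

lemma mul_01[simp]: "mul 0 Q = 0" by (simp add: ore_mult_def)
lemma mul_uminus1: "mul (- P) Q = - mul P Q"
  using mul_add1[of P "-P" Q] by (simp add: eq_neg_iff_add_eq_0 add.commute)
lemma mul_diff1: "mul (P1 - P2) Q = mul P1 Q - mul P2 Q"
  using mul_add1[of P1 "-P2" Q] mul_uminus1 by simp
lemma mul_sum1: "mul (sum f S) Q = (\<Sum>i\<in>S. mul (f i) Q)"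
  by (induction S rule: infinite_finite_induct) (simp_all add: mul_add1)

lemma mul_add2: "mul P (Q1 + Q2) = mul P Q1 + mul P Q2"
  by (simp add: ore_mult_def xmk_add smult_add_right sum.distrib)
lemma mul_02[simp]: "mul P 0 = 0" by (simp add: ore_mult_def)
lemma mul_diff2: "mul P (Q1 - Q2) = mul P Q1 - mul P Q2"
  by (simp add: ore_mult_def xmk_diff smult_diff_right sum_subtractf)
lemma mul_sc2: "mul P (smult [:c:] Q) = smult [:c:] (mul P Q)"
  by (simp add: ore_mult_def xmk_sc smult_sum_right mult.commute)
lemma mul_sum2: "mul P (sum f S) = (\<Sum>i\<in>S. mul P (f i))"
  by (induction S rule: infinite_finite_induct) (simp_all add: mul_add2)

lemma mul_const: "mul [:r:] Q = smult r Q"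
  by (simp add: ore_mult_def)

lemma mul_pCons0: "mul (pCons 0 A) T = mul A (xm T)"
proof -
  have "mul (pCons 0 A) T = (\<Sum>i\<le>Suc (degree A). smult (coeff (pCons 0 A) i) ((xm^^i) T))"
    by (rule mult_eq) (simp add: degree_pCons_le)
  also have "\<dots> = (\<Sum>i\<le>degree A. smult (coeff A i) ((xm^^i) (xm T)))"
    by (subst sum.atMost_Suc_shift) (simp add: funpow_Suc_right del: funpow.simps)
  also have "\<dots> = mul A (xm T)" by (simp add: ore_mult_def)
  finally show ?thesis .
qed

lemma mul_map: "f 0 = 0 \<Longrightarrow> mul (map_poly f A) T = (\<Sum>i\<le>degree A. smult (f (coeff A i)) ((xm^^i) T))"
  by (subst mult_eq[OF map_poly_degree_leq]) (simp add: coeff_map_poly)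

lemma mul_xm: "mul (xm P) T = xm (mul P T)"
proof -
  have "mul (xm P) T = mul (map_poly \<sigma> P) (xm T) + mul (map_poly \<delta> P) T"
    by (simp add: ore_xmul_def mul_add1 mul_pCons0)
  also have "\<dots> = (\<Sum>i\<le>degree P. smult (\<sigma> (coeff P i)) ((xm^^i) (xm T)) + smult (\<delta> (coeff P i)) ((xm^^i) T))"
    by (simp add: mul_map sum.distrib)
  also have "\<dots> = (\<Sum>i\<le>degree P. xm (smult (coeff P i) ((xm^^i) T)))"
    by (simp add: xm_smult funpow_swap1)
  also have "\<dots> = xm (mul P T)" by (simp add: ore_mult_def xm_sum)
  finally show ?thesis .
qed

lemma mul_xmk: "mul ((xm^^k) P) T = (xm^^k) (mul P T)"
  by (induction k) (simp_all add: mul_xm)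

lemma mul_assoc: "mul (mul P Q) T = mul P (mul Q T)"
proof -
  have "mul (mul P Q) T = (\<Sum>i\<le>degree P. smult (coeff P i) (mul ((xm^^i) Q) T))"
    unfolding ore_mult_def[of \<sigma> \<delta> P Q] by (simp add: mul_sum1 mul_smult1)
  also have "\<dots> = mul P (mul Q T)" by (simp add: mul_xmk ore_mult_def[of \<sigma> \<delta> P])
  finally show ?thesis .
qed

lemma xmk_1: "(xm^^k) 1 = monom 1 k"
proof (induction k)
  case 0 then show ?case by (simp add: one_pCons monom_0)
next
  case (Suc k)
  have "xm (monom 1 k) = monom 1 (Suc k)"
    by (rule poly_eqI) (simp add: coeff_xm coeff_monom s_1 d_1 split: nat.splits)
  then show ?case using Suc by simp
qed

lemma mul_1: "mul P 1 = P"
  by (simp add: ore_mult_def xmk_1 smult_monom poly_as_sum_of_monoms)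

lemma mul_1l: "mul 1 P = P"
  by (metis mul_const one_pCons smult_1_left)

lemma mul_top:
  assumes "P \<noteq> 0" "Q \<noteq> 0"
  shows "degree (mul P Q) = degree P + degree Q \<and>
         coeff (mul P Q) (degree P + degree Q) = lead_coeff P * sk (degree P) (lead_coeff Q)"
proof -
  let ?f = "\<lambda>i. smult (coeff P i) ((xm^^i) Q)"
  let ?d = "degree P + degree Q"
  have split: "mul P Q = (\<Sum>i<degree P. ?f i) + ?f (degree P)"
    by (simp add: ore_mult_def lessThan_Suc_atMost[symmetric] add.commute)
  have low: "degree (\<Sum>i<degree P. ?f i) < ?d \<or> (\<Sum>i<degree P. ?f i) = 0"
  proof (cases "degree P")
    case 0 then show ?thesis by simp
  next
    case (Suc p)
    have "degree (\<Sum>i<degree P. ?f i) \<le> degree Q + p"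
    proof (rule degree_sum_le)
      fix i assume "i \<in> {..<degree P}"
      then have "i \<le> p" using Suc by simp
      then show "degree (?f i) \<le> degree Q + p"
        using degree_smult_le deg_xmk_le[of i Q] by (meson add_le_mono order.trans order_refl)
    qed simp
    then show ?thesis using Suc by simp
  qed
  have ftop: "degree (?f (degree P)) = ?d \<and> coeff (?f (degree P)) ?d = lead_coeff P * sk (degree P) (lead_coeff Q)"
    using xmk_top[OF assms(2), of "degree P"] assms(1) by (simp add: add.commute)
  have c0: "coeff (\<Sum>i<degree P. ?f i) j = 0" if "j \<ge> ?d" for j
  proof (cases "(\<Sum>i<degree P. ?f i) = 0")
    case True then show ?thesis by simp
  next
    case False then have "degree (\<Sum>i<degree P. ?f i) < ?d" using low by simp
    then show ?thesis using that by (intro coeff_eq_0) simp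
  qed
  have nz: "lead_coeff P * sk (degree P) (lead_coeff Q) \<noteq> 0"
    using assms sk_eq0 by simp
  have ctop: "coeff (mul P Q) ?d = lead_coeff P * sk (degree P) (lead_coeff Q)"
    using c0[of ?d] ftop by (simp add: split)
  have "degree (mul P Q) \<le> ?d"
  proof (rule degree_le, intro allI impI)
    fix j assume "?d < j"
    then show "coeff (mul P Q) j = 0"
      using c0[of j] ftop coeff_eq_0[of "?f (degree P)" j] by (simp add: split)
  qed
  moreover have "?d \<le> degree (mul P Q)" using ctop nz le_degree by metis
  ultimately show ?thesis using ctop by simp
qed

lemma mul_nz: assumes "P \<noteq> 0" "Q \<noteq> 0" shows "mul P Q \<noteq> 0"
proof
  assume "mul P Q = 0"
  then have "coeff (mul P Q) (degree P + degree Q) = 0" by simp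
  with mul_top[OF assms] have "lead_coeff P * sk (degree P) (lead_coeff Q) = 0" by simp
  with assms sk_eq0 show False by simp
qed

lemma mul_cancel: assumes "F \<noteq> 0" "mul F A = mul F B" shows "A = B"
proof -
  have "mul F (A - B) = 0" by (simp add: mul_diff2 assms)
  then have "A - B = 0" using mul_nz assms(1) by blast
  then show ?thesis by simp
qed

end



lemma poly_lemma:
  fixes a b H :: "'a::field poly"
  assumes H: "degree H > 1" and b: "b \<noteq> 0" and eq: "pcompose a H * b = a * pcompose b H"
  shows "\<exists>c. a = smult c b"
proof -
  have H0: "degree H > 0" using H by simp
  have degeq: "degree a' = degree b" if a'0: "a' \<noteq> 0" and eqa: "pcompose a' H * b = a' * pcompose b H" for a'
  proof -
    have n1: "pcompose a' H \<noteq> 0" using a'0 pcompose_eq_0_iff[OF H0] by blast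
    have n2: "pcompose b H \<noteq> 0" using b pcompose_eq_0_iff[OF H0] by blast
    have "degree (pcompose a' H * b) = degree a' * degree H + degree b"
      by (simp only: degree_mult_eq[OF n1 b] degree_pcompose)
    moreover have "degree (a' * pcompose b H) = degree a' + degree b * degree H"
      by (simp only: degree_mult_eq[OF a'0 n2] degree_pcompose)
    ultimately have 1: "degree a' * degree H + degree b = degree a' + degree b * degree H"
      using eqa by simp
    obtain e where e: "degree H = Suc (Suc e)" using H by (cases "degree H"; cases "degree H - 1"; auto)
    have "degree a' * Suc e = degree b * Suc e" using 1 unfolding e by (simp only: mult_Suc_right)
    then show ?thesis by (metis Suc_neq_Zero mult_right_cancel)
  qed
  show ?thesis
  proof (cases "a = 0")
    case True then show ?thesis by (intro exI[of _ 0]) simp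
  next
    case False
    define c where "c = lead_coeff a / lead_coeff b"
    define a' where "a' = a - smult c b"
    have da: "degree a = degree b" using degeq[OF False eq] .
    have "pcompose a' H * b = pcompose a H * b - smult c (pcompose b H * b)"
      unfolding a'_def by (simp only: pcompose_diff pcompose_smult left_diff_distrib mult_smult_left)
    also have "\<dots> = a * pcompose b H - smult c (b * pcompose b H)"
      by (simp only: eq mult.commute[of "pcompose b H" b])
    also have "\<dots> = a' * pcompose b H"
      unfolding a'_def by (simp only: left_diff_distrib mult_smult_left)
    finally have eq': "pcompose a' H * b = a' * pcompose b H" .
    have lb: "lead_coeff b \<noteq> 0" using b by simp
    have c0: "coeff a' (degree b) = 0"
      unfolding a'_def c_def using da lb by simp
    have "a' = 0"
    proof (rule ccontr)
      assume a'0: "a' \<noteq> 0"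
      then have "degree a' = degree b" using degeq eq' by blast
      then have "coeff a' (degree a') = 0" using c0 by simp
      then show False using a'0 by simp
    qed
    then show ?thesis unfolding a'_def by auto
  qed
qed

context ore begin

definition comm where "comm X Y \<longleftrightarrow> mul X Y = mul Y X"

lemma comm_sym: "comm X Y \<longleftrightarrow> comm Y X" by (auto simp: comm_def)
lemma comm_add: "comm X Y \<Longrightarrow> comm X Z \<Longrightarrow> comm X (Y + Z)"
  by (simp add: comm_def mul_add1 mul_add2)
lemma comm_diff: "comm X Y \<Longrightarrow> comm X Z \<Longrightarrow> comm X (Y - Z)"
  by (simp add: comm_def mul_diff1 mul_diff2)
lemma comm_sc: "comm X Y \<Longrightarrow> comm X (smult [:c:] Y)"
  by (simp add: comm_def mul_smult1 mul_sc2)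
lemma comm_0: "comm X 0" by (simp add: comm_def)
lemma comm_mul: "comm X Y \<Longrightarrow> comm X Z \<Longrightarrow> comm X (mul Y Z)"
  unfolding comm_def by (metis mul_assoc)
lemma comm_sum: "(\<And>i. i \<in> S \<Longrightarrow> comm X (f i)) \<Longrightarrow> comm X (sum f S)"
  by (induction S rule: infinite_finite_induct) (simp_all add: comm_0 comm_add)

lemma mul_K1: "mul [:[:c:]:] P = smult [:c:] P" by (simp add: mul_const)
lemma mul_K2: "mul P [:[:c:]:] = smult [:c:] P"
proof -
  have "[:[:c:]:] = smult [:c:] (1::'a poly poly)" by (simp add: one_pCons)
  then have "mul P [:[:c:]:] = mul P (smult [:c:] 1)" by simp
  also have "\<dots> = smult [:c:] (mul P 1)" by (rule mul_sc2)
  finally show ?thesis by (simp add: mul_1)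
qed
lemma comm_K: "comm X [:[:c:]:]" by (simp add: comm_def mul_K1 mul_K2)
lemma comm_1: "comm X 1" using comm_K[of X 1] by (simp add: one_pCons)

definition pw where "pw X k = (mul X ^^ k) 1"
lemma pw_0: "pw X 0 = 1" by (simp add: pw_def)
lemma pw_Suc: "pw X (Suc k) = mul X (pw X k)" by (simp add: pw_def)

lemma comm_pw: "comm Y X \<Longrightarrow> comm Y (pw X k)"
  by (induction k) (simp_all add: pw_0 pw_Suc comm_1 comm_mul)

lemma deg_pw: "X \<noteq> 0 \<Longrightarrow> pw X k \<noteq> 0 \<and> degree (pw X k) = k * degree X"
proof (induction k)
  case 0 then show ?case by (simp add: pw_0)
next
  case (Suc k)
  then have "pw X k \<noteq> 0" "degree (pw X k) = k * degree X" by auto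
  moreover have "degree (mul X (pw X k)) = degree X + degree (pw X k)"
    using mul_top[OF Suc.prems \<open>pw X k \<noteq> 0\<close>] by blast
  ultimately show ?case using mul_nz[OF Suc.prems] unfolding pw_Suc by simp
qed

lemma lead_eq:
  assumes "comm P Z" "P \<noteq> 0" "Z \<noteq> 0"
  shows "lead_coeff P * sk (degree P) (lead_coeff Z) = lead_coeff Z * sk (degree Z) (lead_coeff P)"
proof -
  have "coeff (mul P Z) (degree P + degree Z) = coeff (mul Z P) (degree Z + degree P)"
    using assms(1) unfolding comm_def by (simp add: add.commute)
  then show ?thesis using mul_top[OF assms(2,3)] mul_top[OF assms(3,2)] by simp
qed

lemma GU:
  assumes n: "degree P \<ge> 1" and c1: "comm P Z1" and c2: "comm P Z2"
    and z: "Z1 \<noteq> 0" "Z2 \<noteq> 0" and dz: "degree Z1 = degree Z2"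
  shows "\<exists>c. Z1 - smult [:c:] Z2 = 0 \<or> degree (Z1 - smult [:c:] Z2) < degree Z1"
proof -
  have P0: "P \<noteq> 0" using n by auto
  define p where "p = lead_coeff P"
  define z1 where "z1 = lead_coeff Z1"
  define z2 where "z2 = lead_coeff Z2"
  define nn where "nn = degree P"
  define m where "m = degree Z1"
  define \<rho> where "\<rho> = sk m p"
  have e1: "p * sk nn z1 = z1 * \<rho>" using lead_eq[OF c1 P0 z(1)] unfolding p_def z1_def nn_def \<rho>_def m_def .
  have e2: "p * sk nn z2 = z2 * \<rho>" using lead_eq[OF c2 P0 z(2)] unfolding p_def z2_def nn_def \<rho>_def m_def dz .
  have "p * (sk nn z1 * z2) = (p * sk nn z1) * z2" by (simp only: mult.assoc)
  also have "\<dots> = (z1 * \<rho>) * z2" by (simp only: e1)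
  also have "\<dots> = z1 * (z2 * \<rho>)" by (simp only: ac_simps)
  also have "\<dots> = z1 * (p * sk nn z2)" by (simp only: e2)
  also have "\<dots> = p * (z1 * sk nn z2)" by (simp only: ac_simps)
  finally have "p * (sk nn z1 * z2) = p * (z1 * sk nn z2)" .
  moreover have "p \<noteq> 0" unfolding p_def using P0 by simp
  ultimately have eq: "sk nn z1 * z2 = z1 * sk nn z2" by simp
  have eq': "pcompose z1 (hk nn) * z2 = z1 * pcompose z2 (hk nn)" using eq by (simp only: sk_pcomp)
  have "degree h ^ 1 \<le> degree h ^ nn" using h_deg n unfolding nn_def by (intro power_increasing) auto
  then have Hd: "degree (hk nn) > 1" using deg_hk h_deg by simp
  have z2nz: "z2 \<noteq> 0" unfolding z2_def using z by simp
  obtain c where c: "z1 = smult c z2" using poly_lemma[OF Hd z2nz eq'] by blast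
  define W where "W = Z1 - smult [:c:] Z2"
  have cW: "coeff W m = 0" unfolding W_def m_def using c dz z1_def z2_def by simp
  have "degree (smult [:c:] Z2) \<le> m" using degree_smult_le[of "[:c:]" Z2] dz unfolding m_def by simp
  then have dW: "degree W \<le> m" unfolding W_def m_def by (intro degree_diff_le) simp_all
  have "W = 0 \<or> degree W < m"
  proof (cases "W = 0")
    case False
    then have "coeff W (degree W) \<noteq> 0" by simp
    then have "degree W \<noteq> m" using cW by auto
    then show ?thesis using dW by simp
  qed simp
  then show ?thesis unfolding W_def m_def by blast
qed

lemma deg0_case:
  assumes d0: "degree P = 0" and nK: "P \<notin> ore_K" and c: "comm P Z"
  shows "degree Z = 0"
proof (rule ccontr)
  assume m: "degree Z \<noteq> 0"
  then have Z0: "Z \<noteq> 0" by auto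
  define p where "p = coeff P 0"
  have Pp: "P = [:p:]" using d0 p_def by (metis degree_0_id)
  have dp: "degree p \<noteq> 0"
  proof
    assume "degree p = 0"
    then have "p = [:coeff p 0:]" by (metis degree_0_id)
    then have "P \<in> ore_K" using Pp by (auto simp: ore_K_def)
    then show False using nK by simp
  qed
  then have P0: "P \<noteq> 0" using Pp by auto
  have "lead_coeff P = p" using Pp by simp
  then have "p * lead_coeff Z = lead_coeff Z * sk (degree Z) p"
    using lead_eq[OF c P0 Z0] d0 by (simp add: sk_0)
  then have "sk (degree Z) p = p" using Z0 by (simp add: mult.commute)
  then have "degree p * degree h ^ degree Z = degree p" using deg_sk by metis
  then have "degree h ^ degree Z = 1" using dp by simp
  moreover have "degree h ^ degree Z > 1" using one_less_power[OF h_deg] m by auto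
  ultimately show False by linarith
qed

lemma deg0_comm:
  assumes "degree Z1 = 0" "degree Z2 = 0" shows "comm Z1 Z2"
proof -
  define a where "a = coeff Z1 0"
  define b where "b = coeff Z2 0"
  have 1: "Z1 = [:a:]" unfolding a_def using degree_0_id[OF assms(1)] by simp
  have 2: "Z2 = [:b:]" unfolding b_def using degree_0_id[OF assms(2)] by simp
  have "mul Z1 Z2 = [:a * b:]" unfolding 1 2 mul_const by simp
  moreover have "mul Z2 Z1 = [:b * a:]" unfolding 1 2 mul_const by simp
  ultimately show ?thesis unfolding comm_def by (simp add: mult.commute)
qed

end



lemma NT1:
  fixes q y n :: nat assumes n: "n > 0"
  shows "\<exists>a b. gcd (a*q + b*y) n = gcd (gcd q y) n"
proof -
  obtain u v :: int where uv: "u * int q + v * int y = int (gcd q y)"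
    using bezout_int[of "int q" "int y"] by auto
  define a where "a = nat (u mod int n)"
  define b where "b = nat (v mod int n)"
  have ia: "int a = u mod int n" unfolding a_def using n by simp
  have ib: "int b = v mod int n" unfolding b_def using n by simp
  have "int (a*q + b*y) mod int n = (u mod int n * int q + v mod int n * int y) mod int n"
    by (simp add: ia ib)
  also have "\<dots> = (u * int q + v * int y) mod int n" by (metis mod_add_cong mod_mult_left_eq)
  also have "\<dots> = int (gcd q y) mod int n" using uv by simp
  finally have "int ((a*q + b*y) mod n) = int (gcd q y mod n)" by (simp add: of_nat_mod)
  then have m: "(a*q + b*y) mod n = gcd q y mod n" by simp
  have "gcd (a*q + b*y) n = gcd ((a*q + b*y) mod n) n" by (metis gcd_red_nat gcd.commute)
  also have "\<dots> = gcd (gcd q y mod n) n" using m by simp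
  also have "\<dots> = gcd (gcd q y) n" by (metis gcd_red_nat gcd.commute)
  finally show ?thesis by blast
qed

lemma NT2:
  fixes q t n :: nat assumes n: "n > 0" and dv: "gcd q n dvd t" and big: "n * q \<le> t"
  shows "\<exists>a b. a*n + b*q = t"
proof -
  obtain u v :: int where uv: "u * int q + v * int n = int (gcd q n)"
    using bezout_int[of "int q" "int n"] by auto
  obtain s where s: "t = gcd q n * s" using dv by blast
  define b where "b = nat ((u * int s) mod int n)"
  have ib: "int b = (u * int s) mod int n" unfolding b_def using n by simp
  have bn: "b < n" using ib n by (metis Euclidean_Rings.pos_mod_bound of_nat_0_less_iff of_nat_less_iff)
  have "int (b * q) mod int n = ((u * int s) mod int n * int q) mod int n" by (simp add: ib)
  also have "\<dots> = (int s * (u * int q)) mod int n" by (simp add: mod_simps ac_simps)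
  also have "u * int q = int (gcd q n) - v * int n" using uv by simp
  also have "(int s * (int (gcd q n) - v * int n)) mod int n = (int s * int (gcd q n)) mod int n"
  proof -
    have "int s * (int (gcd q n) - v * int n) = int s * int (gcd q n) + (- (int s * v)) * int n"
      by (simp add: algebra_simps)
    then show ?thesis by (simp only: mod_mult_self1)
  qed
  also have "int s * int (gcd q n) = int t" using s by simp
  finally have m: "int (b * q) mod int n = int t mod int n" .
  have bq: "b * q \<le> t" using bn big by (metis less_imp_le_nat mult_le_mono1 order.trans)
  have "int n dvd int (b*q) - int t" using m by (simp add: mod_eq_dvd_iff)
  then have "int n dvd int t - int (b*q)" by (simp add: dvd_diff_commute)
  then have "int n dvd int (t - b*q)" using bq by (simp add: of_nat_diff)
  then have "n dvd t - b*q" by (simp only: of_nat_dvd_iff)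
  then obtain a where "t - b*q = n * a" by blast
  then have "a*n + b*q = t" using bq by (simp add: mult.commute)
  then show ?thesis by blast
qed


lemma const_sum: "[:sum f S:] = (\<Sum>i\<in>S. [:f i:])"
  by (rule poly_eqI) (simp add: coeff_sum coeff_pCons split: nat.splits)

locale cen = ore +
  fixes P :: "'a poly poly"
  assumes n1: "1 \<le> degree P"
begin

lemma P0: "P \<noteq> 0" using n1 by auto

lemma sc_sc: "smult [:a:] (smult [:b:] X) = smult [:a * b:] X" by (simp add: mult.commute)

lemma dep: "\<forall>I z. finite I \<and> N < card I \<and> (\<forall>i\<in>I. comm P (z i) \<and> (z i = 0 \<or> degree (z i) < N))
   \<longrightarrow> (\<exists>c. (\<exists>i\<in>I. c i \<noteq> 0) \<and> (\<Sum>i\<in>I. smult [:c i:] (z i)) = 0)"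
proof (induction N)
  case 0
  show ?case
  proof (intro allI impI)
    fix I and z :: "'b \<Rightarrow> 'a poly poly"
    assume a: "finite I \<and> 0 < card I \<and> (\<forall>i\<in>I. comm P (z i) \<and> (z i = 0 \<or> degree (z i) < 0))"
    then have "I \<noteq> {}" by auto
    then obtain i0 where "i0 \<in> I" by blast
    moreover have "(\<Sum>i\<in>I. smult [:1:] (z i)) = 0" using a by simp
    ultimately show "\<exists>c. (\<exists>i\<in>I. c i \<noteq> 0) \<and> (\<Sum>i\<in>I. smult [:c i:] (z i)) = 0"
      by (intro exI[of _ "\<lambda>_. 1"]) auto
  qed
next
  case (Suc N)
  show ?case
  proof (intro allI impI)
    fix I and z :: "'b \<Rightarrow> 'a poly poly"
    assume a: "finite I \<and> Suc N < card I \<and> (\<forall>i\<in>I. comm P (z i) \<and> (z i = 0 \<or> degree (z i) < Suc N))"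
    then have fI: "finite I" and cI: "Suc N < card I"
      and zc: "\<And>i. i \<in> I \<Longrightarrow> comm P (z i)"
      and zd: "\<And>i. i \<in> I \<Longrightarrow> z i = 0 \<or> degree (z i) < Suc N" by auto
    show "\<exists>c. (\<exists>i\<in>I. c i \<noteq> 0) \<and> (\<Sum>i\<in>I. smult [:c i:] (z i)) = 0"
    proof (cases "\<forall>i\<in>I. z i = 0 \<or> degree (z i) < N")
      case True
      have "finite I \<and> N < card I \<and> (\<forall>i\<in>I. comm P (z i) \<and> (z i = 0 \<or> degree (z i) < N))"
        using fI cI zc True by auto
      then show ?thesis by (rule Suc.IH[rule_format])
    next
      case False
      then obtain i0 where i0: "i0 \<in> I" "z i0 \<noteq> 0" "degree (z i0) = N"
        using zd by (metis less_SucE)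
      define \<gamma> where "\<gamma> i = (if z i \<noteq> 0 \<and> degree (z i) = N then
          (SOME c. z i - smult [:c:] (z i0) = 0 \<or> degree (z i - smult [:c:] (z i0)) < degree (z i)) else 0)" for i
      define w where "w i = z i - smult [:\<gamma> i:] (z i0)" for i
      have wp: "comm P (w i) \<and> (w i = 0 \<or> degree (w i) < N)" if iI: "i \<in> I" for i
      proof -
        have "comm P (w i)" unfolding w_def using zc[OF iI] zc[OF i0(1)] by (intro comm_diff comm_sc)
        moreover have "w i = 0 \<or> degree (w i) < N"
        proof (cases "z i \<noteq> 0 \<and> degree (z i) = N")
          case True
          have ex: "\<exists>c. z i - smult [:c:] (z i0) = 0 \<or> degree (z i - smult [:c:] (z i0)) < degree (z i)"
            using GU[OF n1 zc[OF iI] zc[OF i0(1)]] True i0 by simp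
          have "z i - smult [:\<gamma> i:] (z i0) = 0 \<or> degree (z i - smult [:\<gamma> i:] (z i0)) < degree (z i)"
            unfolding \<gamma>_def using True someI_ex[OF ex] by simp
          then show ?thesis using True unfolding w_def by simp
        next
          case False
          then have "\<gamma> i = 0" unfolding \<gamma>_def by (rule if_not_P)
          then have "w i = z i" unfolding w_def by simp
          then show ?thesis using zd[OF iI] False by auto
        qed
        ultimately show ?thesis ..
      qed
      define I' where "I' = I - {i0}"
      have fI': "finite I'" using fI I'_def by simp
      have cI': "N < card I'" using cI i0(1) fI unfolding I'_def by simp
      obtain c' where c'1: "\<exists>i\<in>I'. c' i \<noteq> 0" and c'2: "(\<Sum>i\<in>I'. smult [:c' i:] (w i)) = 0"
      proof -
        have "finite I' \<and> N < card I' \<and> (\<forall>i\<in>I'. comm P (w i) \<and> (w i = 0 \<or> degree (w i) < N))"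
          using fI' cI' wp unfolding I'_def by blast
        from Suc.IH[rule_format, OF this] show ?thesis using that by blast
      qed
      define s where "s = (\<Sum>j\<in>I'. c' j * \<gamma> j)"
      define c where "c i = (if i = i0 then - s else c' i)" for i
      have "(\<Sum>i\<in>I'. smult [:c' i:] (z i)) = (\<Sum>i\<in>I'. smult [:c' i:] (w i) + smult [:c' i * \<gamma> i:] (z i0))"
        by (rule sum.cong) (simp_all add: w_def smult_diff_right mult.commute)
      also have "\<dots> = (\<Sum>i\<in>I'. smult [:c' i * \<gamma> i:] (z i0))" by (simp add: sum.distrib c'2)
      also have "\<dots> = smult [:s:] (z i0)" by (simp add: s_def const_sum smult_sum)
      finally have e: "(\<Sum>i\<in>I'. smult [:c' i:] (z i)) = smult [:s:] (z i0)" .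
      have "(\<Sum>i\<in>I. smult [:c i:] (z i)) = smult [:c i0:] (z i0) + (\<Sum>i\<in>I'. smult [:c i:] (z i))"
        unfolding I'_def using fI i0(1) by (simp add: sum.remove)
      also have "(\<Sum>i\<in>I'. smult [:c i:] (z i)) = (\<Sum>i\<in>I'. smult [:c' i:] (z i))"
        by (rule sum.cong) (auto simp: c_def I'_def)
      finally have "(\<Sum>i\<in>I. smult [:c i:] (z i)) = 0" using e by (simp add: c_def flip: smult_add_left)
      moreover have "\<exists>i\<in>I. c i \<noteq> 0" using c'1 unfolding c_def I'_def by auto
      ultimately show ?thesis by blast
    qed
  qed
qed

end



context cen begin

definition Q0 where "Q0 = (SOME Q. comm P Q \<and> Q \<noteq> 0 \<and>
   (\<forall>Z. comm P Z \<and> Z \<noteq> 0 \<longrightarrow> gcd (degree Q) (degree P) \<le> gcd (degree Z) (degree P)))"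

lemma commPP: "comm P P" by (simp add: comm_def)

lemma Q0_props: "comm P Q0 \<and> Q0 \<noteq> 0 \<and>
   (\<forall>Z. comm P Z \<and> Z \<noteq> 0 \<longrightarrow> gcd (degree Q0) (degree P) \<le> gcd (degree Z) (degree P))"
proof -
  have "\<exists>Q. (comm P Q \<and> Q \<noteq> 0) \<and> (\<forall>Z. comm P Z \<and> Z \<noteq> 0 \<longrightarrow> gcd (degree Q) (degree P) \<le> gcd (degree Z) (degree P))"
    using ex_has_least_nat[of "\<lambda>Z. comm P Z \<and> Z \<noteq> 0" P "\<lambda>Z. gcd (degree Z) (degree P)"] commPP P0 by blast
  then show ?thesis unfolding Q0_def by (rule someI_ex[where P = "\<lambda>Q. comm P Q \<and> Q \<noteq> 0 \<and> _ Q", OF exE]) blast+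
qed

lemma cQ0: "comm P Q0" and Q0nz: "Q0 \<noteq> 0"
  and Qmin: "comm P Z \<Longrightarrow> Z \<noteq> 0 \<Longrightarrow> gcd (degree Q0) (degree P) \<le> gcd (degree Z) (degree P)"
  using Q0_props by auto

definition g0 where "g0 = gcd (degree Q0) (degree P)"

lemma g0_pos: "g0 > 0" unfolding g0_def using n1 by simp

lemma dvd_all: assumes cY: "comm P Y" and Y0: "Y \<noteq> 0" shows "g0 dvd degree Y"
proof (rule ccontr)
  assume nd: "\<not> g0 dvd degree Y"
  let ?q = "degree Q0" and ?y = "degree Y" and ?n = "degree P"
  obtain a b where ab: "gcd (a * ?q + b * ?y) ?n = gcd (gcd ?q ?y) ?n" using NT1 n1 by fastforce
  define Z where "Z = mul (pw Q0 a) (pw Y b)"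
  have cZ: "comm P Z" unfolding Z_def using cQ0 cY by (intro comm_mul comm_pw)
  have p1: "pw Q0 a \<noteq> 0" "degree (pw Q0 a) = a * ?q" using deg_pw[OF Q0nz] by auto
  have p2: "pw Y b \<noteq> 0" "degree (pw Y b) = b * ?y" using deg_pw[OF Y0] by auto
  have Z0: "Z \<noteq> 0" unfolding Z_def using mul_nz p1 p2 by blast
  have dZ: "degree Z = a * ?q + b * ?y" unfolding Z_def using mul_top[OF p1(1) p2(1)] p1 p2 by simp
  have "g0 \<le> gcd (gcd ?q ?y) ?n" using Qmin[OF cZ Z0] dZ ab unfolding g0_def by simp
  moreover have "gcd (gcd ?q ?y) ?n dvd g0" unfolding g0_def
    by (meson gcd_dvd1 gcd_dvd2 gcd_greatest dvd_trans)
  ultimately have "gcd (gcd ?q ?y) ?n = g0" using g0_pos by (simp add: dvd_imp_le le_antisym)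
  moreover have "gcd (gcd ?q ?y) ?n dvd ?y" by (meson gcd_dvd1 gcd_dvd2 dvd_trans)
  ultimately show False using nd by simp
qed

definition M where "M a b = mul (pw P a) (pw Q0 b)"

lemma M_props: "comm P (M a b) \<and> M a b \<noteq> 0 \<and> degree (M a b) = a * degree P + b * degree Q0"
proof -
  have p1: "pw P a \<noteq> 0" "degree (pw P a) = a * degree P" using deg_pw[OF P0] by auto
  have p2: "pw Q0 b \<noteq> 0" "degree (pw Q0 b) = b * degree Q0" using deg_pw[OF Q0nz] by auto
  have "comm P (M a b)" unfolding M_def using commPP cQ0 by (intro comm_mul comm_pw)
  moreover have "M a b \<noteq> 0" unfolding M_def using mul_nz p1 p2 by blast
  moreover have "degree (M a b) = a * degree P + b * degree Q0"
    unfolding M_def using mul_top[OF p1(1) p2(1)] p1 p2 by simp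
  ultimately show ?thesis by blast
qed

definition L where "L = {Y. comm P Y \<and> (\<forall>Z. comm P Z \<longrightarrow> comm Q0 Z \<longrightarrow> comm Z Y)}"

lemma L_0: "0 \<in> L" unfolding L_def by (simp add: comm_0)
lemma L_add: "A \<in> L \<Longrightarrow> B \<in> L \<Longrightarrow> A + B \<in> L" unfolding L_def by (simp add: comm_add)
lemma L_diff: "A \<in> L \<Longrightarrow> B \<in> L \<Longrightarrow> A - B \<in> L" unfolding L_def by (simp add: comm_diff)
lemma L_sc: "A \<in> L \<Longrightarrow> smult [:c:] A \<in> L" unfolding L_def by (simp add: comm_sc)
lemma L_sum: "(\<And>i. i \<in> S \<Longrightarrow> f i \<in> L) \<Longrightarrow> sum f S \<in> L"
  by (induction S rule: infinite_finite_induct) (simp_all add: L_0 L_add)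
lemma L_M: "M a b \<in> L"
  unfolding L_def
proof (intro CollectI conjI allI impI)
  show "comm P (M a b)" using M_props by blast
  fix Z assume "comm P Z" "comm Q0 Z"
  then have "comm Z P" "comm Z Q0" by (simp_all add: comm_sym)
  then show "comm Z (M a b)" unfolding M_def by (intro comm_mul comm_pw)
qed

definition N0 where "N0 = degree P * degree Q0 + 1"

lemma reduce: "comm P Z \<Longrightarrow> \<exists>l\<in>L. Z - l = 0 \<or> degree (Z - l) < N0"
proof (induction "degree Z" arbitrary: Z rule: less_induct)
  case less
  show ?case
  proof (cases "Z = 0 \<or> degree Z < N0")
    case True then show ?thesis using L_0 by (intro bexI[of _ 0]) auto
  next
    case False
    then have Z0: "Z \<noteq> 0" and big: "degree P * degree Q0 \<le> degree Z" unfolding N0_def by auto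
    have "g0 dvd degree Z" using dvd_all[OF less.prems Z0] .
    then obtain a b where ab: "a * degree P + b * degree Q0 = degree Z"
      using NT2[of "degree P" "degree Q0" "degree Z"] n1 big unfolding g0_def by auto
    have MP: "comm P (M a b)" "M a b \<noteq> 0" "degree (M a b) = degree Z" using M_props ab by auto
    obtain c where c: "Z - smult [:c:] (M a b) = 0 \<or> degree (Z - smult [:c:] (M a b)) < degree Z"
      using GU[OF n1 less.prems MP(1) Z0 MP(2)] MP(3) by auto
    have cL: "smult [:c:] (M a b) \<in> L" using L_sc L_M by blast
    show ?thesis
    proof (cases "Z - smult [:c:] (M a b) = 0")
      case True then show ?thesis using cL by blast
    next
      case False
      then have lt: "degree (Z - smult [:c:] (M a b)) < degree Z" using c by simp
      have "comm P (Z - smult [:c:] (M a b))" using less.prems MP(1) by (intro comm_diff comm_sc)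
      from less.hyps[OF lt this] obtain l where l: "l \<in> L"
        "Z - smult [:c:] (M a b) - l = 0 \<or> degree (Z - smult [:c:] (M a b) - l) < N0" by blast
      have "smult [:c:] (M a b) + l \<in> L" using cL l(1) L_add by blast
      moreover have "Z - (smult [:c:] (M a b) + l) = Z - smult [:c:] (M a b) - l" by (simp add: algebra_simps)
      ultimately show ?thesis using l(2) by metis
    qed
  qed
qed

lemma F_nz:
  assumes ex: "\<exists>i\<le>K. c i \<noteq> 0"
  shows "(\<Sum>i\<le>K. smult [:c i:] (pw P i)) \<noteq> 0"
proof -
  define S where "S = {i. i \<le> K \<and> c i \<noteq> 0}"
  have fS: "finite S" unfolding S_def by simp
  have neS: "S \<noteq> {}" using ex unfolding S_def by auto
  define i0 where "i0 = Max S"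
  have i0S: "i0 \<in> S" unfolding i0_def using fS neS by simp
  have imax: "\<And>i. i \<in> S \<Longrightarrow> i \<le> i0" unfolding i0_def using fS by simp
  define v where "v = smult (c i0) (lead_coeff (pw P i0))"
  have pwd: "\<And>i. degree (pw P i) = i * degree P" using deg_pw[OF P0] by blast
  have tm: "coeff (smult [:c i:] (pw P i)) (i0 * degree P) = (if i = i0 then v else 0)" if iK: "i \<le> K" for i
  proof (cases "i = i0")
    case True then show ?thesis unfolding v_def using pwd[of i0] by simp
  next
    case False
    show ?thesis
    proof (cases "i < i0")
      case True
      then have "degree (pw P i) < i0 * degree P" using pwd[of i] n1 by simp
      then have "coeff (pw P i) (i0 * degree P) = 0" by (rule coeff_eq_0)
      then show ?thesis using False by simp
    next
      case False2: False
      then have "i \<notin> S" using imax \<open>i \<noteq> i0\<close> by fastforce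
      then have "c i = 0" using iK unfolding S_def by simp
      then show ?thesis using False by simp
    qed
  qed
  have "coeff (\<Sum>i\<le>K. smult [:c i:] (pw P i)) (i0 * degree P) = (\<Sum>i\<le>K. if i = i0 then v else 0)"
    unfolding coeff_sum by (rule sum.cong[OF refl], rule tm, simp)
  also have "\<dots> = v" using i0S unfolding S_def by simp
  finally have cf: "coeff (\<Sum>i\<le>K. smult [:c i:] (pw P i)) (i0 * degree P) = v" .
  have "pw P i0 \<noteq> 0" using deg_pw[OF P0, of i0] by simp
  then have "lead_coeff (pw P i0) \<noteq> 0" by simp
  moreover have "c i0 \<noteq> 0" using i0S unfolding S_def by simp
  ultimately have "v \<noteq> 0" unfolding v_def by simp
  then show ?thesis using cf by auto
qed

lemma key: assumes cX: "comm P X"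
  shows "\<exists>F. F \<noteq> 0 \<and> mul F X \<in> L \<and> (\<forall>Y. comm P Y \<longrightarrow> comm Y F)"
proof -
  define Yf where "Yf i = mul (pw P i) X" for i
  have cY: "comm P (Yf i)" for i unfolding Yf_def using commPP cX by (intro comm_mul comm_pw)
  have "\<forall>i. \<exists>l. l \<in> L \<and> (Yf i - l = 0 \<or> degree (Yf i - l) < N0)"
    using reduce[OF cY] by blast
  then obtain l where l: "\<And>i. l i \<in> L" "\<And>i. Yf i - l i = 0 \<or> degree (Yf i - l i) < N0"
    by metis
  define z where "z i = Yf i - l i" for i
  have lP: "comm P (l i)" for i using l(1) unfolding L_def by blast
  have "finite {..N0} \<and> N0 < card {..N0} \<and> (\<forall>i\<in>{..N0}. comm P (z i) \<and> (z i = 0 \<or> degree (z i) < N0))"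
    using cY lP l(2) unfolding z_def by (auto intro: comm_diff)
  from dep[rule_format, OF this] obtain c where c1: "\<exists>i\<in>{..N0}. c i \<noteq> 0"
    and c2: "(\<Sum>i\<in>{..N0}. smult [:c i:] (z i)) = 0" by blast
  define F where "F = (\<Sum>i\<le>N0. smult [:c i:] (pw P i))"
  have Fnz: "F \<noteq> 0" unfolding F_def using F_nz c1 by auto
  have "mul F X = (\<Sum>i\<le>N0. smult [:c i:] (Yf i))"
    unfolding F_def Yf_def by (simp add: mul_sum1 mul_smult1)
  also have "\<dots> = (\<Sum>i\<le>N0. smult [:c i:] (l i)) + (\<Sum>i\<le>N0. smult [:c i:] (z i))"
    unfolding z_def by (simp add: sum.distrib[symmetric] smult_add_right[symmetric])
  also have "\<dots> = (\<Sum>i\<le>N0. smult [:c i:] (l i))" using c2 by simp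
  finally have "mul F X \<in> L" using l(1) by (simp add: L_sum L_sc)
  moreover have "comm Y F" if "comm P Y" for Y
  proof -
    have "comm Y P" using that by (simp add: comm_sym)
    then show ?thesis unfolding F_def by (intro comm_sum comm_sc comm_pw)
  qed
  ultimately show ?thesis using Fnz by blast
qed

lemma comm_Q0: assumes cX: "comm P X" shows "comm Q0 X"
proof -
  obtain F where F: "F \<noteq> 0" "mul F X \<in> L" "\<And>Y. comm P Y \<Longrightarrow> comm Y F" using key[OF cX] by blast
  have c1: "comm Q0 (mul F X)" using F(2) cQ0 unfolding L_def by (auto simp: comm_def)
  have c2: "comm Q0 F" using F(3) cQ0 by blast
  have "mul F (mul X Q0) = mul (mul F X) Q0" by (simp add: mul_assoc)
  also have "\<dots> = mul Q0 (mul F X)" using c1 by (simp add: comm_def)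
  also have "\<dots> = mul (mul Q0 F) X" by (simp add: mul_assoc)
  also have "\<dots> = mul (mul F Q0) X" using c2 by (simp add: comm_def)
  also have "\<dots> = mul F (mul Q0 X)" by (simp add: mul_assoc)
  finally have "mul X Q0 = mul Q0 X" using mul_cancel[OF F(1)] by blast
  then show ?thesis by (simp add: comm_def)
qed

lemma comm_all: assumes cX: "comm P X" and cY: "comm P Y" shows "comm X Y"
proof -
  obtain F where F: "F \<noteq> 0" "mul F X \<in> L" "\<And>Y. comm P Y \<Longrightarrow> comm Y F" using key[OF cX] by blast
  have "comm Q0 Y" using comm_Q0[OF cY] .
  then have c1: "comm Y (mul F X)" using F(2) cY unfolding L_def by blast
  have c2: "comm Y F" using F(3) cY by blast
  have "mul F (mul X Y) = mul (mul F X) Y" by (simp add: mul_assoc)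
  also have "\<dots> = mul Y (mul F X)" using c1 by (simp add: comm_def)
  also have "\<dots> = mul (mul Y F) X" by (simp add: mul_assoc)
  also have "\<dots> = mul (mul F Y) X" using c2 by (simp add: comm_def)
  also have "\<dots> = mul F (mul Y X)" by (simp add: mul_assoc)
  finally have "mul X Y = mul Y X" using mul_cancel[OF F(1)] by blast
  then show ?thesis by (simp add: comm_def)
qed

end

context ore begin

lemma C_comm: assumes nK: "P \<notin> ore_K" and cX: "comm P X" and cY: "comm P Y" shows "comm X Y"
proof (cases "degree P = 0")
  case True
  then show ?thesis using deg0_case[OF True nK cX] deg0_case[OF True nK cY] deg0_comm by blast
next
  case False
  then have "cen \<sigma> \<delta> P" by (intro cen.intro ore_axioms cen_axioms.intro) simp
  then show ?thesis using cen.comm_all cX cY by blast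
qed

lemma K_central: "Z \<in> ore_K \<Longrightarrow> comm Z X"
  unfolding ore_K_def using comm_K comm_sym by blast

lemma cent_eq: "ore_centralizer \<sigma> \<delta> A = {Z. \<forall>P\<in>A. comm P Z}"
  unfolding ore_centralizer_def comm_def by simp

end

theorem proposition4p2:
  fixes \<sigma> \<delta> :: "'a::field poly \<Rightarrow> 'a poly"
    and A :: "'a poly poly set"
  assumes "ore_sigma_ok \<sigma>"
    and "ore_delta_ok \<sigma> \<delta>"
  shows "ore_centralizer \<sigma> \<delta> A = UNIV
       \<or> ore_centralizer \<sigma> \<delta> A = ore_K
       \<or> (\<exists>P. P \<notin> ore_K \<and> ore_centralizer \<sigma> \<delta> A = ore_centralizer \<sigma> \<delta> {P})"
proof -
  interpret ore \<sigma> \<delta> using assms by (rule ore.intro)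
  show ?thesis
  proof (cases "A \<subseteq> ore_K")
    case True
    then have "ore_centralizer \<sigma> \<delta> A = UNIV" unfolding cent_eq using K_central by blast
    then show ?thesis by blast
  next
    case False
    then obtain P0 where P0: "P0 \<in> A" "P0 \<notin> ore_K" by blast
    show ?thesis
    proof (cases "ore_centralizer \<sigma> \<delta> A \<subseteq> ore_K")
      case True
      moreover have "ore_K \<subseteq> ore_centralizer \<sigma> \<delta> A" unfolding cent_eq
        using K_central comm_sym by blast
      ultimately show ?thesis by blast
    next
      case False
      then obtain Q where Q: "Q \<in> ore_centralizer \<sigma> \<delta> A" "Q \<notin> ore_K" by blast
      have QA: "\<And>P. P \<in> A \<Longrightarrow> comm P Q" using Q(1) unfolding cent_eq by blast
      have "ore_centralizer \<sigma> \<delta> A = ore_centralizer \<sigma> \<delta> {Q}"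
      proof
        show "ore_centralizer \<sigma> \<delta> A \<subseteq> ore_centralizer \<sigma> \<delta> {Q}"
        proof
          fix Z assume "Z \<in> ore_centralizer \<sigma> \<delta> A"
          then have "comm P0 Z" using P0(1) unfolding cent_eq by blast
          then have "comm Q Z" using C_comm[OF P0(2) QA[OF P0(1)]] by blast
          then show "Z \<in> ore_centralizer \<sigma> \<delta> {Q}" unfolding cent_eq by blast
        qed
      next
        show "ore_centralizer \<sigma> \<delta> {Q} \<subseteq> ore_centralizer \<sigma> \<delta> A"
        proof
          fix Z assume "Z \<in> ore_centralizer \<sigma> \<delta> {Q}"
          then have cQZ: "comm Q Z" unfolding cent_eq by blast
          have "comm P Z" if PA: "P \<in> A" for P
          proof (cases "P \<in> ore_K")
            case True then show ?thesis using K_central by blast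
          next
            case False
            have "comm Q P" using QA[OF PA] comm_sym by blast
            then show ?thesis using C_comm[OF Q(2) _ cQZ] by blast
          qed
          then show "Z \<in> ore_centralizer \<sigma> \<delta> A" unfolding cent_eq by blast
        qed
      qed
      then show ?thesis using Q(2) by blast
    qed
  qed
qed


end
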